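(* A packed word $w$ is $212$-avoiding if and only if there is a generalized Stirling permutation $u$ with $\mathbf w(u)=w$.
   Context: A word $w=w_1\cdots w_n$ of positive integers is a packed word if its set of letters is $\{1,\dots,m\}$ for some $m\ge0$. It is $212$-avoiding if whenever $i<j<k$ and $w_i=w_k$ we have $w_j\ge w_i$. A planar tree is a rooted tree in which the children of each node are linearly ordered and every node is a leaf or has at least two children (an internal node). A generalized Stirling permutation of degree $n$ is a planar tree with $n+1$ leaves together with a bijection $\kappa$ from its set of internal nodes to $\{1,\dots,N\}$ ($N$ = number of internal nodes) such that the label of each internal node is smaller than the labels of its internal children. Its word $\mathbf w(u)$ is defined recursively: a leaf has empty word; a node $x$ with children $c_1,\dots,c_k$ (left to right) has word $\mathbf w(c_1)\,\kappa(x)\,\mathbf w(c_2)\,\kappa(x)\cdots\kappa(x)\,\mathbf w(c_k)$ (i.e. the label of $x$ is written in each of the $k-1$ gaps between its children), and $\mathbf w(u)$ is the word of the root. *)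

theory Defs
  imports Main
begin

datatype ptree = Leaf | Node nat "ptree list"

fun planar :: "ptree \<Rightarrow> bool" where
  "planar Leaf = True"
| "planar (Node k cs) = (2 \<le> length cs \<and> (\<forall>c\<in>set cs. planar c))"

fun labels :: "ptree \<Rightarrow> nat list" where
  "labels Leaf = []"
| "labels (Node k cs) = k # concat (map labels cs)"

fun increasing :: "ptree \<Rightarrow> bool" where
  "increasing Leaf = True"
| "increasing (Node k cs) =
     (\<forall>c\<in>set cs. (case c of Leaf \<Rightarrow> True | Node k' _ \<Rightarrow> k < k') \<and> increasing c)"

fun join_with :: "nat \<Rightarrow> nat list list \<Rightarrow> nat list" where
  "join_with k [] = []"
| "join_with k [x] = x"
| "join_with k (x # y # xs) = x @ [k] @ join_with k (y # xs)"

fun tword :: "ptree \<Rightarrow> nat list" where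
  "tword Leaf = []"
| "tword (Node k cs) = join_with k (map tword cs)"

definition gen_stirling :: "ptree \<Rightarrow> bool" where
  "gen_stirling t \<longleftrightarrow> planar t \<and> increasing t \<and> distinct (labels t)
     \<and> set (labels t) = {1..length (labels t)}"

definition packed :: "nat list \<Rightarrow> bool" where
  "packed w \<longleftrightarrow> (\<exists>m. set w = {1..m})"

definition avoids212 :: "nat list \<Rightarrow> bool" where
  "avoids212 w \<longleftrightarrow> (\<forall>i j k. i < j \<and> j < k \<and> k < length w \<and> w ! i = w ! k \<longrightarrow> w ! i \<le> w ! j)"

end

theory Submission
  imports Defs
begin

lemma av_left: "avoids212 (a @ b) \<Longrightarrow> avoids212 a"
  unfolding avoids212_def
proof (intro allI impI)
  fix i j k assume h: "\<forall>i j k. i < j \<and> j < k \<and> k < length (a @ b) \<and> (a @ b) ! i = (a @ b) ! k \<longrightarrow> (a @ b) ! i \<le> (a @ b) ! j"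
    and c: "i < j \<and> j < k \<and> k < length a \<and> a ! i = a ! k"
  then show "a ! i \<le> a ! j" using h[rule_format, of i j k] by (simp add: nth_append)
qed

lemma av_right: "avoids212 (a @ b) \<Longrightarrow> avoids212 b"
  unfolding avoids212_def
proof (intro allI impI)
  fix i j k assume h: "\<forall>i j k. i < j \<and> j < k \<and> k < length (a @ b) \<and> (a @ b) ! i = (a @ b) ! k \<longrightarrow> (a @ b) ! i \<le> (a @ b) ! j"
    and c: "i < j \<and> j < k \<and> k < length b \<and> b ! i = b ! k"
  then show "b ! i \<le> b ! j" using h[rule_format, of "length a + i" "length a + j" "length a + k"] by (simp add: nth_append)
qed

lemma av_mid: "avoids212 (p @ m # J) \<Longrightarrow> x \<in> set p \<Longrightarrow> x \<in> set J \<Longrightarrow> x \<le> m"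
proof -
  assume h: "avoids212 (p @ m # J)" "x \<in> set p" "x \<in> set J"
  obtain i where i: "i < length p" "p ! i = x" using h(2) by (auto simp: in_set_conv_nth)
  obtain l where l: "l < length J" "J ! l = x" using h(3) by (auto simp: in_set_conv_nth)
  show ?thesis using h(1)[unfolded avoids212_def, rule_format, of i "length p" "length p + 1 + l"] i l
    by (simp add: nth_append)
qed

lemma av_join2:
  assumes "avoids212 p" "avoids212 J" "set p \<inter> set J = {}" "\<forall>x\<in>set p \<union> set J. k \<le> x"
  shows "avoids212 (p @ k # J)"
  unfolding avoids212_def
proof (intro allI impI)
  fix i j l assume c: "i < j \<and> j < l \<and> l < length (p @ k # J) \<and> (p @ k # J) ! i = (p @ k # J) ! l"
  let ?w = "p @ k # J"
  have allk: "\<forall>y\<in>set ?w. k \<le> y" using assms(4) by auto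
  show "?w ! i \<le> ?w ! j"
  proof (cases "?w ! i = k")
    case True
    have "?w ! j \<in> set ?w" using c by (intro nth_mem) auto
    then show ?thesis using allk True by auto
  next
    case False
    have ni: "i \<noteq> length p" using False by auto
    have nl: "l \<noteq> length p" using False c by auto
    show ?thesis
    proof (cases "l < length p")
      case True
      hence "i < length p" "j < length p" using c by auto
      then show ?thesis using assms(1)[unfolded avoids212_def, rule_format, of i j l] c True by (auto simp: nth_append)
    next
      case lp: False
      show ?thesis
      proof (cases "i < length p")
        case True
        have "p ! i \<in> set p" using True by simp
        moreover have "J ! (l - length p - 1) \<in> set J" using lp nl c by (intro nth_mem) auto
        moreover have "p ! i = J ! (l - length p - 1)" using c True lp nl by (simp add: nth_append nth_Cons')
        ultimately show ?thesis using assms(3) by auto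
      next
        case False
        hence ip: "i > length p" using ni by auto
        have "j > length p" "l > length p" using ip c by auto
        hence e: "?w ! i = J ! (i - length p - 1)" "?w ! j = J ! (j - length p - 1)" "?w ! l = J ! (l - length p - 1)"
          using ip by (auto simp: nth_append nth_Cons')
        have pr: "i - length p - 1 < j - length p - 1 \<and> j - length p - 1 < l - length p - 1 \<and> l - length p - 1 < length J \<and> J ! (i - length p - 1) = J ! (l - length p - 1)"
          using c ip \<open>j > length p\<close> \<open>l > length p\<close> e by auto
        show ?thesis using assms(2)[unfolded avoids212_def, rule_format, OF pr] e by simp
      qed
    qed
  qed
qed


lemma join_Cons: "join_with k (x # xs) = (if xs = [] then x else x @ k # join_with k xs)"
  by (cases xs) auto

lemma set_concat_sub_join: "set (concat ws) \<subseteq> set (join_with k ws)"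
  by (induction ws) (auto simp: join_Cons)

lemma set_join_sub: "set (join_with k ws) \<subseteq> insert k (set (concat ws))"
  by (induction ws) (auto simp: join_Cons)

lemma set_join2: "2 \<le> length ws \<Longrightarrow> set (join_with k ws) = insert k (set (concat ws))"
proof (induction ws)
  case Nil then show ?case by simp
next
  case (Cons a ws)
  then have "ws \<noteq> []" by auto
  then show ?case using set_join_sub[of k ws] set_concat_sub_join[of ws k] by (auto simp: join_Cons)
qed

fun splitOn :: "nat \<Rightarrow> nat list \<Rightarrow> nat list list" where
  "splitOn m [] = [[]]"
| "splitOn m (x # xs) = (if x = m then [] # splitOn m xs
     else (case splitOn m xs of [] \<Rightarrow> [[x]] | y # ys \<Rightarrow> (x # y) # ys))"

lemma splitOn_ne: "splitOn m xs \<noteq> []"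
  by (induction xs) (auto split: list.split)

lemma join_splitOn: "join_with m (splitOn m xs) = xs"
proof (induction xs)
  case Nil then show ?case by simp
next
  case (Cons x xs)
  show ?case
  proof (cases "x = m")
    case True then show ?thesis using Cons splitOn_ne[of m xs] by (simp add: join_Cons)
  next
    case False
    then obtain y ys where e: "splitOn m xs = y # ys" using splitOn_ne[of m xs] by (cases "splitOn m xs") auto
    show ?thesis using Cons False e by (simp add: join_Cons split: if_splits)
  qed
qed

lemma splitOn_parts: "p \<in> set (splitOn m xs) \<Longrightarrow> set p \<subseteq> set xs - {m} \<and> length p \<le> length xs"
proof (induction xs arbitrary: p)
  case Nil then show ?case by simp
next
  case (Cons x xs)
  show ?case
  proof (cases "x = m")
    case True then show ?thesis using Cons by fastforce
  next
    case False
    then obtain y ys where e: "splitOn m xs = y # ys" using splitOn_ne[of m xs] by (cases "splitOn m xs") auto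
    show ?thesis using Cons.prems Cons.IH[of y] Cons.IH False e by fastforce
  qed
qed

lemma splitOn_short: "m \<in> set xs \<Longrightarrow> p \<in> set (splitOn m xs) \<Longrightarrow> length p < length xs"
proof (induction xs arbitrary: p)
  case Nil then show ?case by simp
next
  case (Cons x xs)
  show ?case
  proof (cases "x = m")
    case True then show ?thesis using Cons splitOn_parts[of p m xs] by fastforce
  next
    case False
    then obtain y ys where e: "splitOn m xs = y # ys" using splitOn_ne[of m xs] by (cases "splitOn m xs") auto
    show ?thesis using Cons.prems Cons.IH[of y] Cons.IH False e by fastforce
  qed
qed

lemma splitOn_len: "m \<in> set xs \<Longrightarrow> 2 \<le> length (splitOn m xs)"
proof (induction xs)
  case Nil then show ?case by simp
next
  case (Cons x xs)
  show ?case
  proof (cases "x = m")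
    case True then show ?thesis using splitOn_ne[of m xs] by (cases "splitOn m xs") auto
  next
    case False
    then obtain y ys where e: "splitOn m xs = y # ys" using splitOn_ne[of m xs] by (cases "splitOn m xs") auto
    show ?thesis using Cons False e by auto
  qed
qed

lemma set_concat_splitOn: "set (concat (splitOn m xs)) = set xs - {m}"
proof -
  have "set (concat (splitOn m xs)) \<subseteq> set xs - {m}" using splitOn_parts by fastforce
  moreover have "set xs \<subseteq> insert m (set (concat (splitOn m xs)))"
    using set_join_sub[of m "splitOn m xs"] join_splitOn[of m xs] by simp
  ultimately show ?thesis by auto
qed

fun disj :: "nat list list \<Rightarrow> bool" where
  "disj [] = True"
| "disj (p # ps) = (set p \<inter> set (concat ps) = {} \<and> disj ps)"

lemma av_join_parts: "avoids212 (join_with m ps) \<Longrightarrow> p \<in> set ps \<Longrightarrow> avoids212 p"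
proof (induction ps)
  case Nil then show ?case by simp
next
  case (Cons a ps)
  show ?case
  proof (cases "ps = []")
    case True then show ?thesis using Cons by simp
  next
    case False
    then have "avoids212 ((a @ [m]) @ join_with m ps)" using Cons.prems by (simp add: join_Cons)
    then show ?thesis using Cons av_left[of a "m # join_with m ps"] av_right[of "a @ [m]"] False
      by (auto simp: join_Cons)
  qed
qed

lemma av_join_disj: "avoids212 (join_with m ps) \<Longrightarrow> \<forall>p\<in>set ps. \<forall>x\<in>set p. m < x \<Longrightarrow> disj ps"
proof (induction ps)
  case Nil then show ?case by simp
next
  case (Cons a ps)
  show ?case
  proof (cases "ps = []")
    case True then show ?thesis by simp
  next
    case False
    then have h: "avoids212 (a @ m # join_with m ps)" using Cons.prems by (simp add: join_Cons)
    then have "avoids212 ((a @ [m]) @ join_with m ps)" by simp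
    then have "avoids212 (join_with m ps)" by (rule av_right)
    then have "disj ps" using Cons by simp
    moreover have "set a \<inter> set (concat ps) = {}"
    proof (rule ccontr)
      assume "set a \<inter> set (concat ps) \<noteq> {}"
      then obtain x where "x \<in> set a" "x \<in> set (concat ps)" by auto
      then have "x \<le> m" "m < x" using av_mid[OF h] set_concat_sub_join[of ps m] Cons.prems(2) by auto
      then show False by simp
    qed
    ultimately show ?thesis by simp
  qed
qed

lemma distinct_concat_disj:
  "(\<forall>p\<in>set ps. distinct (labels (f p)) \<and> set (labels (f p)) = set p) \<Longrightarrow> disj ps \<Longrightarrow>
   distinct (concat (map (labels \<circ> f) ps))"
  by (induction ps) auto


function build :: "nat list \<Rightarrow> ptree" where
  "build w = (if w = [] then Leaf else Node (Min (set w)) (map build (splitOn (Min (set w)) w)))"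
  by pat_completeness auto
termination
  by (relation "measure length") (auto intro!: splitOn_short)

declare build.simps[simp del]

lemma build_main:
  "avoids212 w \<Longrightarrow> planar (build w) \<and> tword (build w) = w \<and> set (labels (build w)) = set w
     \<and> distinct (labels (build w)) \<and> increasing (build w)"
proof (induction w rule: build.induct)
  case (1 w)
  show ?case
  proof (cases "w = []")
    case True then show ?thesis by (simp add: build.simps)
  next
    case False
    define m where "m = Min (set w)"
    define ps where "ps = splitOn m w"
    have mw: "m \<in> set w" using False m_def by simp
    have mle: "\<forall>x\<in>set w. m \<le> x" using m_def by simp
    have b: "build w = Node m (map build ps)" using False m_def ps_def by (simp add: build.simps)
    have partsub: "\<forall>p\<in>set ps. set p \<subseteq> set w - {m}" using splitOn_parts ps_def by blast
    have gt: "\<forall>p\<in>set ps. \<forall>x\<in>set p. m < x" using partsub mle by fastforce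
    have jw: "join_with m ps = w" using join_splitOn ps_def by simp
    have avp: "\<forall>p\<in>set ps. avoids212 p" using av_join_parts[of m ps] "1.prems" jw by auto
    have IH: "\<forall>p\<in>set ps. planar (build p) \<and> tword (build p) = p \<and> set (labels (build p)) = set p
     \<and> distinct (labels (build p)) \<and> increasing (build p)"
      using "1.IH" False avp m_def ps_def by blast
    have len: "2 \<le> length ps" using splitOn_len mw ps_def by simp
    have pl: "planar (build w)" using b IH len by simp
    have tw: "tword (build w) = w" using b IH jw by (simp add: map_idI)
    have sl: "set (labels (build w)) = set w"
      using b IH set_concat_splitOn[of m w] mw ps_def by auto
    have dj: "disj ps" using av_join_disj[of m ps] "1.prems" jw gt by simp
    have dc: "distinct (concat (map (labels \<circ> build) ps))" using distinct_concat_disj[OF _ dj] IH by blast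
    have mn: "m \<notin> set (concat (map labels (map build ps)))" using IH gt by fastforce
    have ds: "distinct (labels (build w))" using b dc mn by simp
    have inc: "increasing (build w)"
    proof -
      have "\<forall>c\<in>set (map build ps). (case c of Leaf \<Rightarrow> True | Node k' _ \<Rightarrow> m < k') \<and> increasing c"
      proof
        fix c assume "c \<in> set (map build ps)"
        then obtain p where p: "p \<in> set ps" "c = build p" by auto
        show "(case c of Leaf \<Rightarrow> True | Node k' _ \<Rightarrow> m < k') \<and> increasing c"
        proof (cases "p = []")
          case True then show ?thesis using p IH by (simp add: build.simps)
        next
          case False
          have "c = Node (Min (set p)) (map build (splitOn (Min (set p)) p))" using p False by (simp add: build.simps)
          moreover have "Min (set p) \<in> set p" using False by simp
          ultimately show ?thesis using p IH gt by auto
        qed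
      qed
      then show ?thesis using b by simp
    qed
    show ?thesis using pl tw sl ds inc by simp
  qed
qed


lemma inc_ge: "increasing t \<Longrightarrow> \<forall>x\<in>set (labels t). (case t of Leaf \<Rightarrow> True | Node k _ \<Rightarrow> k \<le> x)"
proof (induction t)
  case Leaf then show ?case by simp
next
  case (Node k cs)
  have "\<forall>c\<in>set cs. \<forall>x\<in>set (labels c). k \<le> x"
  proof (intro ballI)
    fix c x assume c: "c \<in> set cs" and x: "x \<in> set (labels c)"
    have ic: "increasing c" and kc: "case c of Leaf \<Rightarrow> True | Node k' _ \<Rightarrow> k < k'" using Node.prems c by auto
    show "k \<le> x"
    proof (cases c)
      case Leaf then show ?thesis using x by simp
    next
      case (Node k' ds)
      then show ?thesis using Node.IH[OF c ic] x kc by fastforce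
    qed
  qed
  then show ?case by auto
qed

lemma av_join_all: "(\<forall>w\<in>set ws. avoids212 w) \<Longrightarrow> disj ws \<Longrightarrow> (\<forall>w\<in>set ws. \<forall>x\<in>set w. k < x) \<Longrightarrow> avoids212 (join_with k ws)"
proof (induction ws)
  case Nil then show ?case by (simp add: avoids212_def)
next
  case (Cons a ws)
  show ?case
  proof (cases "ws = []")
    case True then show ?thesis using Cons by simp
  next
    case False
    have "set a \<inter> set (join_with k ws) = {}"
      using Cons.prems set_join_sub[of k ws] by fastforce
    moreover have "\<forall>x\<in>set a \<union> set (join_with k ws). k \<le> x"
      using Cons.prems set_join_sub[of k ws] by fastforce
    ultimately have "avoids212 (a @ k # join_with k ws)"
      using av_join2[of a "join_with k ws" k] Cons by simp
    then show ?thesis using False by (simp add: join_Cons)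
  qed
qed

lemma disj_transfer: "distinct (concat (map f cs)) \<Longrightarrow> (\<forall>c\<in>set cs. set (g c) = set (f c)) \<Longrightarrow> disj (map g cs)"
  by (induction cs) auto

lemma tree_av: "planar t \<Longrightarrow> increasing t \<Longrightarrow> distinct (labels t) \<Longrightarrow>
   avoids212 (tword t) \<and> set (tword t) = set (labels t)"
proof (induction t)
  case Leaf then show ?case by (simp add: avoids212_def)
next
  case (Node k cs)
  have dch: "\<forall>c\<in>set cs. distinct (labels c)"
    using Node.prems(3) by (auto simp: distinct_concat_iff)
  have IH: "\<forall>c\<in>set cs. avoids212 (tword c) \<and> set (tword c) = set (labels c)"
    using Node.IH Node.prems dch by auto
  have len: "2 \<le> length (map tword cs)" using Node.prems by simp
  have st: "set (tword (Node k cs)) = set (labels (Node k cs))"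
    using set_join2[OF len, of k] IH by auto
  have dj: "disj (map tword cs)" using disj_transfer[of labels cs tword] Node.prems IH by simp
  have gt: "\<forall>w\<in>set (map tword cs). \<forall>x\<in>set w. k < x"
  proof (intro ballI)
    fix w x assume w: "w \<in> set (map tword cs)" and x: "x \<in> set w"
    then obtain c where c: "c \<in> set cs" "w = tword c" by auto
    have ic: "increasing c" and kc: "case c of Leaf \<Rightarrow> True | Node k' _ \<Rightarrow> k < k'" using Node.prems c by auto
    have xl: "x \<in> set (labels c)" using IH c x by auto
    show "k < x"
    proof (cases c)
      case Leaf then show ?thesis using xl by simp
    next
      case (Node k' ds)
      then show ?thesis using inc_ge[OF ic] xl kc by fastforce
    qed
  qed
  have "avoids212 (tword (Node k cs))"
    using av_join_all[OF _ dj gt] IH by simp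
  then show ?case using st by simp
qed

theorem mainTheorem4:
  fixes w :: "nat list"
  assumes "packed w"
  shows "avoids212 w \<longleftrightarrow> (\<exists>u. gen_stirling u \<and> tword u = w)"
proof
  assume av: "avoids212 w"
  obtain m where m: "set w = {1..m}" using assms unfolding packed_def by blast
  note bm = build_main[OF av]
  have "length (labels (build w)) = m"
    using bm m distinct_card[of "labels (build w)"] by simp
  then have "gen_stirling (build w)" using bm m unfolding gen_stirling_def by simp
  then show "\<exists>u. gen_stirling u \<and> tword u = w" using bm by blast
next
  assume "\<exists>u. gen_stirling u \<and> tword u = w"
  then obtain u where "gen_stirling u" "tword u = w" by blast
  then show "avoids212 w" using tree_av[of u] unfolding gen_stirling_def by simp
qed

end
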